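(* Let $0<a<b$ and $v_0\in(a,2a)$. For $\mu\in(v_0,2a]$ define $$\chi_s(\mu)=-\frac{2\sqrt{\mathcal G_s(\mu)-\mathcal G_s(v_0)}}{R_s(v_0)}+2\int_{v_0}^{\mu}\frac{\sqrt{\mathcal G_s(\mu)-\mathcal G_s(\xi)}}{R_s(\xi)^2}\,R_s'(\xi)\,d\xi .$$ Then $\mathcal G_s'(\xi)>0$ on $(a,2a)$, $\chi_s$ is well defined and positive on $(v_0,2a]$, and $\chi_s$ is strictly increasing on $(v_0,2a]$, so that its maximum on this interval is attained at $\mu=2a$.
   Context: $R_s(\xi)=\xi-a-b$, $g(\xi)=(2a-\xi)/\xi^3$, and $\mathcal G_s(\xi)=-\dfrac{a(a+b)}{\xi^2}+\dfrac{3a+b}{\xi}+\log\xi$, so that $\mathcal G_s'(\xi)=-R_s(\xi)g(\xi)=\dfrac{2a(a+b)}{\xi^3}-\dfrac{3a+b}{\xi^2}+\dfrac1\xi$. *)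

theory Defs
  imports "HOL-Analysis.Analysis"
begin

definition Rs :: "real \<Rightarrow> real \<Rightarrow> real \<Rightarrow> real" where
  "Rs a b \<xi> = \<xi> - a - b"

definition gs :: "real \<Rightarrow> real \<Rightarrow> real" where
  "gs a \<xi> = (2*a - \<xi>) / \<xi>^3"

definition Gs :: "real \<Rightarrow> real \<Rightarrow> real \<Rightarrow> real" where
  "Gs a b \<xi> = - (a*(a+b)) / \<xi>^2 + (3*a+b) / \<xi> + ln \<xi>"

definition chi_integrand :: "real \<Rightarrow> real \<Rightarrow> real \<Rightarrow> real \<Rightarrow> real" where
  "chi_integrand a b \<mu> \<xi> =
     sqrt (Gs a b \<mu> - Gs a b \<xi>) / (Rs a b \<xi>)^2 * deriv (Rs a b) \<xi>"

definition chi_s :: "real \<Rightarrow> real \<Rightarrow> real \<Rightarrow> real \<Rightarrow> real" where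
  "chi_s a b v0 \<mu> =
     - 2 * sqrt (Gs a b \<mu> - Gs a b v0) / Rs a b v0
     + 2 * integral {v0..\<mu>} (chi_integrand a b \<mu>)"

end

theory Submission
  imports Defs
begin

definition Gd :: "real \<Rightarrow> real \<Rightarrow> real \<Rightarrow> real" where
  "Gd a b x = 2*a*(a+b)/x^3 - (3*a+b)/x^2 + 1/x"

lemma Rs_deriv: "deriv (Rs a b) x = 1"
proof -
  have "(Rs a b has_real_derivative 1) (at x)"
    unfolding Rs_def[abs_def] by (auto intro!: derivative_eq_intros)
  thus ?thesis by (rule DERIV_imp_deriv)
qed

lemma chi_integrand_eq: "chi_integrand a b \<mu> x = sqrt (Gs a b \<mu> - Gs a b x) / (x - a - b)^2"
  unfolding chi_integrand_def Rs_deriv by (simp add: Rs_def)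

lemma Gs_deriv: assumes "x > 0" shows "(Gs a b has_real_derivative Gd a b x) (at x)"
proof -
  have "((\<lambda>x. - (a*(a+b)) / x^2 + (3*a+b) / x + ln x) has_real_derivative Gd a b x) (at x)"
    using assms
    apply (auto intro!: derivative_eq_intros simp: Gd_def)
    apply (simp add: field_simps)
    apply (simp add: algebra_simps eval_nat_numeral)
    done
  thus ?thesis unfolding Gs_def[abs_def] .
qed

lemma Gd_eq: assumes "x > 0" shows "Gd a b x = (a+b-x)*(2*a-x)/x^3"
  using assms by (simp add: Gd_def field_simps power2_eq_square power3_eq_cube)

lemma Gd_pos: assumes "0 < a" "a < b" "0 < x" "x < 2*a" shows "Gd a b x > 0"
  using assms by (simp add: Gd_eq)

lemma Gs_cont: assumes "0 < u" shows "continuous_on {u..v} (Gs a b)"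
proof (rule continuous_at_imp_continuous_on, intro ballI)
  fix x assume "x \<in> {u..v}"
  hence "x > 0" using assms by auto
  thus "isCont (Gs a b) x" using Gs_deriv DERIV_isCont by blast
qed

lemma Gs_strict: assumes "0 < a" "a < b" "0 < x" "x < y" "y \<le> 2*a"
  shows "Gs a b x < Gs a b y"
  apply (rule DERIV_pos_imp_increasing_open[OF assms(4)])
  using assms Gs_deriv Gd_pos apply (metis order.strict_trans order.strict_trans2)
  using Gs_cont assms(3) by blast

lemma integrand_cont: assumes "0 < a" "a < b" "0 < v" "\<mu> \<le> 2*a"
  shows "continuous_on {v..\<mu>} (chi_integrand a b \<mu>)"
proof -
  have "continuous_on {v..\<mu>} (\<lambda>x. sqrt (Gs a b \<mu> - Gs a b x) / (x - a - b)^2)"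
    using assms
    by (intro continuous_intros continuous_on_compose2[OF continuous_on_real_sqrt] Gs_cont) auto
  thus ?thesis by (simp add: chi_integrand_eq[abs_def])
qed


lemma mono_step: assumes "0 < a" "a < b" "a < v0" "v0 < m1" "m1 < m2" "m2 \<le> 2*a"
  shows "chi_s a b v0 m1 < chi_s a b v0 m2"
proof -
  let ?f = "chi_integrand a b"
  have int1a: "?f m1 integrable_on {v0..m1}" "?f m2 integrable_on {v0..m2}"
    using assms by (intro integrable_continuous_interval integrand_cont; simp)+
  have int1b: "?f m2 integrable_on {v0..m1}"
    by (rule integrable_subinterval_real[OF int1a(2)]) (use assms in auto)
  note int1 = int1a(1) int1b int1a(2)
  have G12: "Gs a b m1 < Gs a b m2" using assms by (intro Gs_strict) auto
  have i1: "integral {v0..m1} (?f m1) \<le> integral {v0..m1} (?f m2)"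
  proof (rule integral_le[OF int1(1,2)])
    fix x assume "x \<in> {v0..m1}"
    show "?f m1 x \<le> ?f m2 x" unfolding chi_integrand_eq
      using G12 by (intro divide_right_mono) auto
  qed
  have i2: "integral {v0..m1} (?f m2) \<le> integral {v0..m2} (?f m2)"
  proof (rule integral_subset_le[OF _ int1(2,3)])
    show "{v0..m1} \<subseteq> {v0..m2}" using assms by auto
    show "\<forall>x\<in>{v0..m2}. 0 \<le> ?f m2 x"
    proof
      fix x assume "x \<in> {v0..m2}"
      hence "Gs a b x \<le> Gs a b m2" using assms Gs_strict[of a b x m2]
        by (cases "x = m2") auto
      thus "0 \<le> ?f m2 x" unfolding chi_integrand_eq by auto
    qed
  qed
  have "sqrt (Gs a b m1 - Gs a b v0) < sqrt (Gs a b m2 - Gs a b v0)" using G12 by simp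
  hence s: "- 2 * sqrt (Gs a b m1 - Gs a b v0) / Rs a b v0 < - 2 * sqrt (Gs a b m2 - Gs a b v0) / Rs a b v0"
    using assms unfolding Rs_def by (simp add: divide_simps)
  show ?thesis unfolding chi_s_def using s i1 i2 by linarith
qed

theorem mainTheorem4:
  fixes a b v0 :: real
  assumes "0 < a" "a < b" "a < v0" "v0 < 2*a"
  shows "(\<forall>\<xi>\<in>{a<..<2*a}. Gs a b differentiable at \<xi> \<and> deriv (Gs a b) \<xi> > 0)
    \<and> (\<forall>\<mu>\<in>{v0<..2*a}.
          (\<forall>\<xi>\<in>{v0..\<mu>}. Gs a b \<xi> \<le> Gs a b \<mu> \<and> Rs a b \<xi> \<noteq> 0)
          \<and> chi_integrand a b \<mu> integrable_on {v0..\<mu>}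
          \<and> chi_s a b v0 \<mu> > 0)
    \<and> strict_mono_on {v0<..2*a} (chi_s a b v0)
    \<and> (\<forall>\<mu>\<in>{v0<..2*a}. chi_s a b v0 \<mu> \<le> chi_s a b v0 (2*a))"
proof (intro conjI ballI)
  fix x assume x: "x \<in> {a<..<2*a}"
  hence x0: "x > 0" using assms by auto
  show "Gs a b differentiable at x" using Gs_deriv[OF x0] real_differentiable_def by blast
  show "deriv (Gs a b) x > 0" using DERIV_imp_deriv[OF Gs_deriv[OF x0]] Gd_pos[of a b x] assms x by auto
next
  fix m assume m: "m \<in> {v0<..2*a}"
  show "Gs a b x \<le> Gs a b m" if x: "x \<in> {v0..m}" for x
      using x m assms Gs_strict[of a b x m] by (cases "x = m") auto
  show "Rs a b x \<noteq> 0" if x: "x \<in> {v0..m}" for x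
      using x m assms unfolding Rs_def by auto
  have int: "chi_integrand a b m integrable_on {v0..m}"
    using assms m by (intro integrable_continuous_interval integrand_cont) auto
  thus "chi_integrand a b m integrable_on {v0..m}" .
  have nn: "integral {v0..m} (chi_integrand a b m) \<ge> 0"
  proof (rule integral_nonneg[OF int])
    fix x assume "x \<in> {v0..m}"
    hence "Gs a b x \<le> Gs a b m" using m assms Gs_strict[of a b x m]
      by (cases "x = m") auto
    thus "0 \<le> chi_integrand a b m x" unfolding chi_integrand_eq by auto
  qed
  have "Gs a b v0 < Gs a b m" using m assms by (intro Gs_strict) auto
  hence "- 2 * sqrt (Gs a b m - Gs a b v0) / Rs a b v0 > 0"
    using assms unfolding Rs_def by (simp add: divide_simps)
  thus "chi_s a b v0 m > 0" unfolding chi_s_def using nn by linarith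
next
  show "strict_mono_on {v0<..2*a} (chi_s a b v0)"
  proof (rule strict_mono_onI)
    fix r s assume "r \<in> {v0<..2*a}" "s \<in> {v0<..2*a}" "r < s"
    thus "chi_s a b v0 r < chi_s a b v0 s" using mono_step[OF assms(1-3), of r s] by simp
  qed
next
  fix m assume m: "m \<in> {v0<..2*a}"
  thus "chi_s a b v0 m \<le> chi_s a b v0 (2*a)"
    using mono_step[OF assms(1-3), of m "2*a"] by (cases "m = 2*a") auto
qed

end
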